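(* Let $L/K$ be a finite extension, $K'/K$ a finite Galois extension, and $M/K$ a finite extension with $L\subseteq M$ (all inside $\bar K$), such that $\tilde L$ and $K'$ are linearly disjoint over $K$ and $\tilde M$ and $K'$ are linearly disjoint over $K$. Then $\rho_K(M,L)=\rho_{K'}(MK',LK')$.
   Context: $K$ is a perfect field with a fixed algebraic closure $\bar K$; $\tilde L,\tilde M$ denote Galois closures over $K$ in $\bar K$. Root capacity: for $\alpha\in\bar K$ with minimal polynomial $f$ over $K$ and an extension $M/K$, $\rho_K(M,\alpha)$ is the number of roots of $f$ contained in $M$. For a finite extension $L/K$, $\rho_K(M,L):=\rho_K(M,\alpha)$ for any primitive element $\alpha$ with $L=K(\alpha)$ (this is independent of the choice of $\alpha$). $\rho_{K'}$ is defined analogously with base field $K'$. *)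

theory Defs
  imports "HOL-Computational_Algebra.Polynomial"
begin

text \<open>All fields live inside an ambient field type 'a, playing the role of the
fixed algebraic closure of K. Subfields are represented as sets.\<close>

definition subfield :: "'a::field set \<Rightarrow> bool" where
  "subfield F \<longleftrightarrow> 0 \<in> F \<and> 1 \<in> F \<and>
     (\<forall>x\<in>F. \<forall>y\<in>F. x + y \<in> F \<and> x * y \<in> F) \<and>
     (\<forall>x\<in>F. - x \<in> F \<and> inverse x \<in> F)"

definition poly_over :: "'a::field set \<Rightarrow> 'a poly \<Rightarrow> bool" where
  "poly_over F p \<longleftrightarrow> (\<forall>i. coeff p i \<in> F)"

definition is_alg_closure_of :: "'a::field set \<Rightarrow> bool" where
  "is_alg_closure_of K \<longleftrightarrow>
     (\<forall>p::'a poly. degree p > 0 \<longrightarrow> (\<exists>x. poly p x = 0)) \<and>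
     (\<forall>x::'a. \<exists>p. p \<noteq> 0 \<and> poly_over K p \<and> poly p x = 0)"

definition min_poly :: "'a::field set \<Rightarrow> 'a \<Rightarrow> 'a poly" where
  "min_poly F \<alpha> = (THE p. lead_coeff p = 1 \<and> poly_over F p \<and> poly p \<alpha> = 0 \<and>
        (\<forall>q. poly_over F q \<and> poly q \<alpha> = 0 \<longrightarrow> p dvd q))"

definition perfect :: "'a::field set \<Rightarrow> bool" where
  "perfect K \<longleftrightarrow> (\<forall>\<alpha>. rsquarefree (min_poly K \<alpha>))"

definition gen_field :: "'a::field set \<Rightarrow> 'a set \<Rightarrow> 'a set" where
  "gen_field F S = \<Inter> {E. subfield E \<and> F \<subseteq> E \<and> S \<subseteq> E}"

abbreviation compositum :: "'a::field set \<Rightarrow> 'a set \<Rightarrow> 'a set" where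
  "compositum A B \<equiv> gen_field A B"

definition span_over :: "'a::field set \<Rightarrow> 'a set \<Rightarrow> 'a set" where
  "span_over F B = {y. \<exists>c. (\<forall>b\<in>B. c b \<in> F) \<and> y = (\<Sum>b\<in>B. c b * b)}"

definition lin_indep_over :: "'a::field set \<Rightarrow> 'a set \<Rightarrow> bool" where
  "lin_indep_over F S \<longleftrightarrow> finite S \<and>
     (\<forall>c. (\<forall>x\<in>S. c x \<in> F) \<and> (\<Sum>x\<in>S. c x * x) = 0 \<longrightarrow> (\<forall>x\<in>S. c x = 0))"

definition finite_ext :: "'a::field set \<Rightarrow> 'a set \<Rightarrow> bool" where
  "finite_ext K L \<longleftrightarrow> subfield K \<and> subfield L \<and> K \<subseteq> L \<and>
     (\<exists>B. finite B \<and> B \<subseteq> L \<and> L = span_over K B)"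

definition normal_ext :: "'a::field set \<Rightarrow> 'a set \<Rightarrow> bool" where
  "normal_ext K F \<longleftrightarrow> subfield K \<and> subfield F \<and> K \<subseteq> F \<and>
     (\<forall>x\<in>F. \<forall>y. poly (min_poly K x) y = 0 \<longrightarrow> y \<in> F)"

definition galois_ext :: "'a::field set \<Rightarrow> 'a set \<Rightarrow> bool" where
  "galois_ext K F \<longleftrightarrow> finite_ext K F \<and> normal_ext K F \<and>
     (\<forall>x\<in>F. rsquarefree (min_poly K x))"

definition galois_closure :: "'a::field set \<Rightarrow> 'a set \<Rightarrow> 'a set" where
  "galois_closure K L = \<Inter> {F. normal_ext K F \<and> L \<subseteq> F}"

definition lin_disjoint :: "'a::field set \<Rightarrow> 'a set \<Rightarrow> 'a set \<Rightarrow> bool" where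
  "lin_disjoint K A B \<longleftrightarrow>
     (\<forall>S. S \<subseteq> A \<and> lin_indep_over K S \<longrightarrow> lin_indep_over B S)"

definition root_cap :: "'a::field set \<Rightarrow> 'a set \<Rightarrow> 'a \<Rightarrow> nat" where
  "root_cap K M \<alpha> = card {x\<in>M. poly (min_poly K \<alpha>) x = 0}"

definition root_cap_ext :: "'a::field set \<Rightarrow> 'a set \<Rightarrow> 'a set \<Rightarrow> nat" where
  "root_cap_ext K M L = root_cap K M (SOME \<alpha>. \<alpha> \<in> L \<and> gen_field K {\<alpha>} = L)"

end

theory Submission
  imports Defs "HOL-Algebra.Multiplicative_Group"
begin

hide_const (open) UnivPoly.coeff UnivPoly.monom Coset.order Module.smult


section \<open>Subfields\<close>

lemma sfB:
  assumes "subfield F"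
  shows sf0: "0 \<in> F" and sf1: "1 \<in> F"
    and sf_add: "\<And>x y. x \<in> F \<Longrightarrow> y \<in> F \<Longrightarrow> x + y \<in> F"
    and sf_mult: "\<And>x y. x \<in> F \<Longrightarrow> y \<in> F \<Longrightarrow> x * y \<in> F"
    and sf_uminus: "\<And>x. x \<in> F \<Longrightarrow> - x \<in> F"
    and sf_inverse: "\<And>x. x \<in> F \<Longrightarrow> inverse x \<in> F"
  using assms unfolding subfield_def by auto

lemma sf_diff: "subfield F \<Longrightarrow> x \<in> F \<Longrightarrow> y \<in> F \<Longrightarrow> x - y \<in> F"
  by (metis diff_conv_add_uminus sf_add sf_uminus)

lemma sf_divide: "subfield F \<Longrightarrow> x \<in> F \<Longrightarrow> y \<in> F \<Longrightarrow> x / y \<in> F"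
  by (metis divide_inverse sf_inverse sf_mult)

lemma sf_sum: "subfield F \<Longrightarrow> (\<And>i. i \<in> A \<Longrightarrow> f i \<in> F) \<Longrightarrow> sum f A \<in> F"
  by (induction A rule: infinite_finite_induct) (auto intro: sf0 sf_add)

lemma sf_power: "subfield F \<Longrightarrow> x \<in> F \<Longrightarrow> x ^ n \<in> F"
  by (induction n) (auto intro: sf1 sf_mult)

lemma subfield_UNIV: "subfield (UNIV :: 'a::field set)"
  by (simp add: subfield_def)

lemma gen_field_subfield: "subfield (gen_field F S)"
  unfolding gen_field_def subfield_def by auto

lemma gen_field_upper: "F \<subseteq> gen_field F S" "S \<subseteq> gen_field F S"
  unfolding gen_field_def by auto

lemma gen_field_least: "subfield E \<Longrightarrow> F \<subseteq> E \<Longrightarrow> S \<subseteq> E \<Longrightarrow> gen_field F S \<subseteq> E"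
  unfolding gen_field_def by auto

section \<open>Polynomials over a subfield\<close>

lemma poly_over_pCons [simp]: "poly_over F (pCons a p) \<longleftrightarrow> a \<in> F \<and> poly_over F p"
  unfolding poly_over_def
proof safe
  fix i assume "\<forall>i. coeff (pCons a p) i \<in> F"
  then show "a \<in> F" "coeff p i \<in> F"
    by (metis coeff_pCons_0, metis coeff_pCons_Suc)
next
  fix i assume "a \<in> F" "\<forall>i. coeff p i \<in> F"
  then show "coeff (pCons a p) i \<in> F" by (cases i) auto
qed

lemma poly_over_0 [simp]: "subfield F \<Longrightarrow> poly_over F 0"
  by (simp add: poly_over_def sf0)

lemma poly_over_const: "subfield F \<Longrightarrow> a \<in> F \<Longrightarrow> poly_over F [:a:]"
  by simp

lemma poly_over_add: "subfield F \<Longrightarrow> poly_over F p \<Longrightarrow> poly_over F q \<Longrightarrow> poly_over F (p + q)"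
  by (simp add: poly_over_def sf_add)

lemma poly_over_uminus: "subfield F \<Longrightarrow> poly_over F p \<Longrightarrow> poly_over F (- p)"
  by (simp add: poly_over_def sf_uminus)

lemma poly_over_diff: "subfield F \<Longrightarrow> poly_over F p \<Longrightarrow> poly_over F q \<Longrightarrow> poly_over F (p - q)"
  by (simp add: poly_over_def sf_diff)

lemma poly_over_smult: "subfield F \<Longrightarrow> a \<in> F \<Longrightarrow> poly_over F p \<Longrightarrow> poly_over F (smult a p)"
  by (simp add: poly_over_def sf_mult)

lemma poly_over_mult: "subfield F \<Longrightarrow> poly_over F p \<Longrightarrow> poly_over F q \<Longrightarrow> poly_over F (p * q)"
  unfolding poly_over_def coeff_mult by (auto intro!: sf_sum sf_mult)

lemma poly_over_monom: "subfield F \<Longrightarrow> a \<in> F \<Longrightarrow> poly_over F (monom a n)"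
  by (simp add: poly_over_def coeff_monom sf0)

lemma poly_over_pcompose: "subfield F \<Longrightarrow> poly_over F p \<Longrightarrow> poly_over F q \<Longrightarrow> poly_over F (pcompose p q)"
  by (induction p) (auto simp: pcompose_pCons intro!: poly_over_add poly_over_mult)

lemma poly_over_mono: "F \<subseteq> G \<Longrightarrow> poly_over F p \<Longrightarrow> poly_over G p"
  unfolding poly_over_def by auto

lemma poly_in: "subfield E \<Longrightarrow> F \<subseteq> E \<Longrightarrow> poly_over F p \<Longrightarrow> x \<in> E \<Longrightarrow> poly p x \<in> E"
  by (induction p) (auto intro!: sf_add sf_mult sf0)

lemma poly_over_sum: "subfield F \<Longrightarrow> (\<And>i. i \<in> A \<Longrightarrow> poly_over F (f i)) \<Longrightarrow> poly_over F (sum f A)"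
  by (induction A rule: infinite_finite_induct) (auto intro: poly_over_add)

section \<open>Reduction and minimal polynomials\<close>

lemma monic_dvd_eq:
  fixes p q :: "'a::field poly"
  assumes "lead_coeff p = 1" "lead_coeff q = 1" "p dvd q" "degree q \<le> degree p"
  shows "p = q"
proof -
  obtain k where k: "q = p * k" using assms(3) by (auto elim: dvdE)
  have "q \<noteq> 0" "p \<noteq> 0" using assms by auto
  then have "k \<noteq> 0" using k by auto
  then have "degree q = degree p + degree k" using k \<open>p \<noteq> 0\<close> by (simp add: degree_mult_eq)
  then have dk: "degree k = 0" using assms(4) by simp
  have "lead_coeff q = lead_coeff p * lead_coeff k" using k by (simp add: lead_coeff_mult)
  then have "lead_coeff k = 1" using assms by simp
  then have "k = 1" using dk by (metis degree_0_id one_pCons)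
  then show ?thesis using k by simp
qed

lemma poly_reduce:
  assumes sf: "subfield F" and m: "poly_over F m" "lead_coeff m = 1"
  shows "poly_over F p \<Longrightarrow> \<exists>r. poly_over F r \<and> (r = 0 \<or> degree r < degree m) \<and> m dvd (p - r)"
proof (induction "degree p" arbitrary: p rule: less_induct)
  case less
  show ?case
  proof (cases "p = 0 \<or> degree p < degree m")
    case True
    then show ?thesis using less.prems by (intro exI[of _ p]) auto
  next
    case False
    then have p0: "p \<noteq> 0" and dm: "degree m \<le> degree p" by auto
    define k where "k = degree p - degree m"
    define q where "q = smult (lead_coeff p) (monom 1 k * m)"
    have m0: "m \<noteq> 0" using m by auto
    have dq: "degree (monom 1 k * m) = degree p"
      using m0 dm by (simp add: degree_mult_eq degree_monom_eq k_def)
    have cq: "coeff (monom 1 k * m) (degree p) = 1"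
      using dq m by (metis lead_coeff_monom lead_coeff_mult mult_1)
    define p' where "p' = p - q"
    have ov: "poly_over F p'" unfolding p'_def q_def
      using less.prems sf m
      by (intro poly_over_diff poly_over_smult poly_over_mult poly_over_monom)
         (auto simp: poly_over_def sf1)
    have c0: "coeff p' (degree p) = 0" unfolding p'_def q_def using cq by simp
    have dle: "degree p' \<le> degree p" unfolding p'_def q_def
      by (rule degree_diff_le) (auto intro: order.trans[OF degree_smult_le] simp: dq)
    have dvq: "m dvd q" unfolding q_def by (simp add: dvd_smult)
    show ?thesis
    proof (cases "p' = 0")
      case True
      then show ?thesis using dvq sf unfolding p'_def by (intro exI[of _ 0]) auto
    next
      case False
      then have "degree p' \<noteq> degree p" using c0 by (metis leading_coeff_0_iff)
      then have "degree p' < degree p" using dle by simp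
      from less.hyps[OF this ov] obtain r where r: "poly_over F r" "r = 0 \<or> degree r < degree m"
        "m dvd p' - r" by blast
      have "p - r = (p' - r) + q" unfolding p'_def by simp
      then have "m dvd p - r" using dvd_add[OF r(3) dvq] by metis
      then show ?thesis using r by blast
    qed
  qed
qed

definition alg :: "'a::field set \<Rightarrow> 'a \<Rightarrow> bool" where
  "alg F x \<longleftrightarrow> (\<exists>p. p \<noteq> 0 \<and> poly_over F p \<and> poly p x = 0)"

lemma alg_mono: "F \<subseteq> G \<Longrightarrow> alg F x \<Longrightarrow> alg G x"
  unfolding alg_def using poly_over_mono by blast

lemma min_poly_ex:
  assumes sf: "subfield F" and a: "alg F x"
  shows "\<exists>m. lead_coeff m = 1 \<and> poly_over F m \<and> poly m x = 0 \<and>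
           (\<forall>q. poly_over F q \<and> poly q x = 0 \<longrightarrow> m dvd q)"
proof -
  define P where "P n \<longleftrightarrow> (\<exists>p. p \<noteq> 0 \<and> poly_over F p \<and> poly p x = 0 \<and> degree p = n)" for n
  have "\<exists>n. P n" using a unfolding alg_def P_def by blast
  define n where "n = (LEAST n. P n)"
  have "P n" unfolding n_def using \<open>\<exists>n. P n\<close> by (metis LeastI)
  then obtain p0 where p0: "p0 \<noteq> 0" "poly_over F p0" "poly p0 x = 0" "degree p0 = n"
    unfolding P_def by blast
  define m where "m = smult (inverse (lead_coeff p0)) p0"
  have "coeff p0 n \<noteq> 0" using p0 by (metis leading_coeff_0_iff)
  have lm: "lead_coeff m = 1" unfolding m_def using p0 \<open>coeff p0 n \<noteq> 0\<close> by (simp add: lead_coeff_smult)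
  have om: "poly_over F m" unfolding m_def using p0 sf
    by (intro poly_over_smult sf_inverse) (auto simp: poly_over_def)
  have rm: "poly m x = 0" unfolding m_def using p0 by simp
  have dm: "degree m = n" unfolding m_def using p0 \<open>coeff p0 n \<noteq> 0\<close> by simp
  have "m dvd q" if q: "poly_over F q" "poly q x = 0" for q
  proof -
    obtain r where r: "poly_over F r" "r = 0 \<or> degree r < degree m" "m dvd q - r"
      using poly_reduce[OF sf om lm q(1)] by blast
    have "poly (q - r) x = 0" using r(3) rm by (metis dvdE mult_eq_0_iff poly_mult)
    then have rx: "poly r x = 0" using q by simp
    have "r = 0"
    proof (rule ccontr)
      assume "r \<noteq> 0"
      then have "P (degree r)" unfolding P_def using r rx by blast
      then have "n \<le> degree r" unfolding n_def by (rule Least_le)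
      then show False using r(2) dm \<open>r \<noteq> 0\<close> by simp
    qed
    then show ?thesis using r by simp
  qed
  then show ?thesis using lm om rm by blast
qed

lemma min_poly_props:
  assumes sf: "subfield F" and a: "alg F x"
  shows "lead_coeff (min_poly F x) = 1 \<and> poly_over F (min_poly F x) \<and> poly (min_poly F x) x = 0 \<and>
           (\<forall>q. poly_over F q \<and> poly q x = 0 \<longrightarrow> min_poly F x dvd q)"
proof -
  have "\<exists>!m. lead_coeff m = 1 \<and> poly_over F m \<and> poly m x = 0 \<and>
           (\<forall>q. poly_over F q \<and> poly q x = 0 \<longrightarrow> m dvd q)"
  proof (rule ex_ex1I)
    show "\<exists>m. lead_coeff m = 1 \<and> poly_over F m \<and> poly m x = 0 \<and>
           (\<forall>q. poly_over F q \<and> poly q x = 0 \<longrightarrow> m dvd q)" by (rule min_poly_ex[OF sf a])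
  next
    fix m1 m2 :: "'a poly"
    assume h1: "lead_coeff m1 = 1 \<and> poly_over F m1 \<and> poly m1 x = 0 \<and>
           (\<forall>q. poly_over F q \<and> poly q x = 0 \<longrightarrow> m1 dvd q)"
      and h2: "lead_coeff m2 = 1 \<and> poly_over F m2 \<and> poly m2 x = 0 \<and>
           (\<forall>q. poly_over F q \<and> poly q x = 0 \<longrightarrow> m2 dvd q)"
    then have d12: "m1 dvd m2" and d21: "m2 dvd m1" by auto
    have "m1 \<noteq> 0" "m2 \<noteq> 0" using h1 h2 by auto
    then have "degree m2 \<le> degree m1" using d21 by (simp add: dvd_imp_degree_le)
    then show "m1 = m2" using h1 h2 d12 monic_dvd_eq by blast
  qed
  then show ?thesis unfolding min_poly_def by (rule theI')
qed

lemma mp_monic: "subfield F \<Longrightarrow> alg F x \<Longrightarrow> lead_coeff (min_poly F x) = 1"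
  using min_poly_props by blast
lemma mp_over: "subfield F \<Longrightarrow> alg F x \<Longrightarrow> poly_over F (min_poly F x)"
  using min_poly_props by blast
lemma mp_root: "subfield F \<Longrightarrow> alg F x \<Longrightarrow> poly (min_poly F x) x = 0"
  using min_poly_props by blast
lemma mp_dvd: "subfield F \<Longrightarrow> alg F x \<Longrightarrow> poly_over F q \<Longrightarrow> poly q x = 0 \<Longrightarrow> min_poly F x dvd q"
  using min_poly_props by blast
lemma mp_nz: "subfield F \<Longrightarrow> alg F x \<Longrightarrow> min_poly F x \<noteq> 0"
  using mp_monic by fastforce
lemma mp_deg_le: "subfield F \<Longrightarrow> alg F x \<Longrightarrow> q \<noteq> 0 \<Longrightarrow> poly_over F q \<Longrightarrow> poly q x = 0 \<Longrightarrow>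
    degree (min_poly F x) \<le> degree q"
  using mp_dvd dvd_imp_degree_le by blast
lemma mp_deg_pos: "subfield F \<Longrightarrow> alg F x \<Longrightarrow> 0 < degree (min_poly F x)"
  by (metis degree_0_id gr0I mp_monic mp_root one_neq_zero one_pCons poly_1)

lemma mp_coeff0:
  assumes sf: "subfield F" and a: "alg F y" and y: "y \<noteq> 0"
  shows "coeff (min_poly F y) 0 \<noteq> 0"
proof
  assume c: "coeff (min_poly F y) 0 = 0"
  obtain c h2 where h: "min_poly F y = pCons c h2" by (cases "min_poly F y") auto
  have "c = 0" using c h by simp
  have o2: "poly_over F h2" using mp_over[OF sf a] h by simp
  have "poly (min_poly F y) y = 0" by (rule mp_root[OF sf a])
  then have r2: "poly h2 y = 0" using h \<open>c = 0\<close> y by simp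
  have "h2 \<noteq> 0" using mp_nz[OF sf a] h \<open>c = 0\<close> by auto
  then have "degree (min_poly F y) = Suc (degree h2)" using h by simp
  moreover have "degree (min_poly F y) \<le> degree h2" using mp_deg_le[OF sf a \<open>h2 \<noteq> 0\<close> o2 r2] .
  ultimately show False by simp
qed


lemma subfieldI: "0 \<in> F \<Longrightarrow> 1 \<in> F \<Longrightarrow> (\<And>x y. x \<in> F \<Longrightarrow> y \<in> F \<Longrightarrow> x + y \<in> F) \<Longrightarrow>
  (\<And>x y. x \<in> F \<Longrightarrow> y \<in> F \<Longrightarrow> x * y \<in> F) \<Longrightarrow> (\<And>x. x \<in> F \<Longrightarrow> - x \<in> F) \<Longrightarrow>
  (\<And>x. x \<in> F \<Longrightarrow> inverse x \<in> F) \<Longrightarrow> subfield F"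
  unfolding subfield_def by auto

lemma dvd_root: "f dvd h \<Longrightarrow> poly f x = 0 \<Longrightarrow> poly h x = 0"
  by (elim dvdE) simp

lemma gen_field_single:
  assumes sf: "subfield F" and al: "\<And>y. alg F y"
  shows "gen_field F {x} = {poly p x | p. poly_over F p}"
proof -
  define R where "R = {poly p x | p. poly_over F p}"
  have memR: "poly p x \<in> R" if "poly_over F p" for p unfolding R_def using that by blast
  have inv: "inverse y \<in> R" if "y \<in> R" for y
  proof (cases "y = 0")
    case True
    then show ?thesis using memR[of 0] sf by simp
  next
    case False
    obtain p where p: "poly_over F p" "y = poly p x" using \<open>y \<in> R\<close> unfolding R_def by blast
    obtain c h2 where h: "min_poly F y = pCons c h2" by (cases "min_poly F y") auto
    have c0: "c \<noteq> 0" using mp_coeff0[OF sf al False] h by simp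
    have o2: "poly_over F h2" using mp_over[OF sf al[of y]] h by simp
    have "c + y * poly h2 y = 0" using mp_root[OF sf al, of y] h by simp
    then have "y * poly h2 y = - c" by (simp add: add_eq_0_iff)
    then have "y * (- poly h2 y / c) = 1" using c0 by (simp add: field_simps)
    then have "inverse y = - poly h2 y / c" by (rule inverse_unique)
    also have "\<dots> = poly (smult (- inverse c) (pcompose h2 p)) x"
      using p by (simp add: poly_pcompose field_simps)
    finally have eq: "inverse y = poly (smult (- inverse c) (pcompose h2 p)) x" .
    have cF: "c \<in> F" using mp_over[OF sf al[of y]] h by simp
    have "poly_over F (smult (- inverse c) (pcompose h2 p))"
      using sf o2 p(1)
      by (intro poly_over_smult poly_over_pcompose sf_uminus sf_inverse cF)
    from memR[OF this] eq show ?thesis by simp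
  qed
  have sR: "subfield R"
  proof (rule subfieldI)
    show "0 \<in> R" using memR[of 0] sf by simp
    show "1 \<in> R" using memR[of "[:1:]"] sf sf1[OF sf] by simp
    fix a b assume a: "a \<in> R" and b: "b \<in> R"
    then obtain p q where pq: "poly_over F p" "a = poly p x" "poly_over F q" "b = poly q x"
      unfolding R_def by blast
    show "a + b \<in> R" using memR[OF poly_over_add[OF sf pq(1) pq(3)]] pq(2,4) by simp
    show "a * b \<in> R" using memR[OF poly_over_mult[OF sf pq(1) pq(3)]] pq(2,4) by simp
  next
    fix a assume a: "a \<in> R"
    then obtain p where pq: "poly_over F p" "a = poly p x"
      unfolding R_def by blast
    show "- a \<in> R" using memR[OF poly_over_uminus[OF sf pq(1)]] pq(2) by simp
    show "inverse a \<in> R" using inv a by blast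
  qed
  have FR: "F \<subseteq> R"
  proof
    fix a assume "a \<in> F" then show "a \<in> R" using memR[of "[:a:]"] sf by simp
  qed
  have xR: "x \<in> R" using memR[of "[:0, 1:]"] sf sf0[OF sf] sf1[OF sf] by simp
  have "gen_field F {x} \<subseteq> R" using gen_field_least[OF sR FR] xR by blast
  moreover have "R \<subseteq> gen_field F {x}"
  proof
    fix y assume "y \<in> R"
    then obtain p where "poly_over F p" "y = poly p x" unfolding R_def by blast
    moreover have "x \<in> gen_field F {x}" using gen_field_upper(2)[of "{x}" F] by blast
    ultimately show "y \<in> gen_field F {x}"
      using poly_in[OF gen_field_subfield gen_field_upper(1)] by blast
  qed
  ultimately have "gen_field F {x} = R" by (rule subset_antisym)
  then show ?thesis by (simp add: R_def)
qed

lemma poly_sum_lt: fixes x :: "'a::field" assumes "degree p < n" shows "poly p x = (\<Sum>i<n. coeff p i * x ^ i)"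
  unfolding Polynomial.poly_altdef using assms by (intro sum.mono_neutral_left) (auto simp: coeff_eq_0)

lemma pow_indep_zero:
  assumes li: "lin_indep_over G ((\<lambda>i. x^i) ` {..<n})" and inj: "inj_on (\<lambda>i. x^i) {..<n}"
    and p: "poly_over G p" "degree p < n" "poly p x = 0"
  shows "p = 0"
proof -
  define c where "c y = coeff p (inv_into {..<n} (\<lambda>i. x^i) y)" for y
  have cv: "c (x^i) = coeff p i" if "i < n" for i
    unfolding c_def using inv_into_f_f[OF inj] that by simp
  have "(\<Sum>y\<in>(\<lambda>i. x^i) ` {..<n}. c y * y) = (\<Sum>i<n. c (x^i) * x^i)"
    by (simp add: sum.reindex[OF inj])
  also have "\<dots> = (\<Sum>i<n. coeff p i * x^i)" using cv by (intro sum.cong) auto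
  also have "\<dots> = 0" using poly_sum_lt[OF p(2)] p(3) by simp
  finally have s0: "(\<Sum>y\<in>(\<lambda>i. x^i) ` {..<n}. c y * y) = 0" .
  have cG: "\<forall>y\<in>(\<lambda>i. x^i) ` {..<n}. c y \<in> G" using p(1) unfolding c_def poly_over_def by blast
  have "\<forall>y\<in>(\<lambda>i. x^i) ` {..<n}. c y = 0" using li s0 cG unfolding lin_indep_over_def by blast
  then have "coeff p i = 0" for i
    using cv p(2) by (cases "i < n") (auto simp: coeff_eq_0)
  then show ?thesis by (simp add: poly_eqI)
qed

lemma pow_inj:
  assumes sf: "subfield K" and al: "alg K x"
  shows "inj_on (\<lambda>i. x^i) {..<degree (min_poly K x)}"
proof -
  define n where "n = degree (min_poly K x)"
  have *: "False" if ij: "i < j" "j < n" "x^i = x^j" for i j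
  proof -
    define q where "q = monom 1 j - monom (1::'a) i"
    have "coeff q j = 1" using ij unfolding q_def by (simp add: coeff_monom)
    then have q0: "q \<noteq> 0" by auto
    have "poly q x = 0" unfolding q_def using ij by (simp add: poly_monom)
    moreover have "poly_over K q" unfolding q_def using sf
      by (intro poly_over_diff poly_over_monom sf1) auto
    ultimately have "n \<le> degree q" unfolding n_def using mp_deg_le[OF sf al q0] by blast
    moreover have "degree q \<le> j" unfolding q_def
      using ij by (intro degree_diff_le) (auto intro: order.trans[OF degree_monom_le])
    ultimately show False using ij by simp
  qed
  show ?thesis unfolding n_def[symmetric]
  proof (rule inj_onI)
    fix i j assume "i \<in> {..<n}" "j \<in> {..<n}" "x^i = x^j"
    then show "i = j" using *[of i j] *[of j i] by (cases i j rule: linorder_cases) auto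
  qed
qed

lemma pow_indep:
  assumes sf: "subfield K" and al: "alg K x"
  shows "lin_indep_over K ((\<lambda>i. x^i) ` {..<degree (min_poly K x)})"
proof -
  define n where "n = degree (min_poly K x)"
  have inj: "inj_on (\<lambda>i. x^i) {..<n}" unfolding n_def by (rule pow_inj[OF sf al])
  have n0: "0 < n" unfolding n_def by (rule mp_deg_pos[OF sf al])
  have "\<forall>y\<in>(\<lambda>i. x^i) ` {..<n}. c y = 0"
    if cK: "\<forall>y\<in>(\<lambda>i. x^i) ` {..<n}. c y \<in> K" and s0: "(\<Sum>y\<in>(\<lambda>i. x^i) ` {..<n}. c y * y) = 0" for c
  proof -
    define p where "p = (\<Sum>i<n. monom (c (x^i)) i)"
    have cp: "coeff p j = (if j < n then c (x^j) else 0)" for j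
      unfolding p_def by (simp add: coeff_sum coeff_monom)
    have "poly p x = (\<Sum>i<n. c (x^i) * x^i)" unfolding p_def by (simp add: poly_sum poly_monom)
    also have "\<dots> = 0" using s0 by (simp add: sum.reindex[OF inj])
    finally have px: "poly p x = 0" .
    have po: "poly_over K p" unfolding p_def using sf cK
      by (intro poly_over_sum poly_over_monom) auto
    have "p = 0"
    proof (rule ccontr)
      assume "p \<noteq> 0"
      then have "n \<le> degree p" unfolding n_def using mp_deg_le[OF sf al _ po px] by blast
      moreover have "degree p \<le> n - 1" by (rule degree_le) (auto simp: cp)
      ultimately show False using n0 by simp
    qed
    then show ?thesis using cp by (metis coeff_0 imageE lessThan_iff)
  qed
  then show ?thesis unfolding lin_indep_over_def n_def by blast
qed

lemma mp_lin_disj: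
  assumes sK: "subfield K" and sK': "subfield K'" and KK': "K \<subseteq> K'" and al: "alg K x"
    and ld: "lin_disjoint K A K'" and PA: "(\<lambda>i. x^i) ` {..<degree (min_poly K x)} \<subseteq> A"
  shows "min_poly K' x = min_poly K x"
proof -
  define n where "n = degree (min_poly K x)"
  have al': "alg K' x" using alg_mono[OF KK' al] .
  have li: "lin_indep_over K' ((\<lambda>i. x^i) ` {..<n})"
    using ld PA pow_indep[OF sK al] unfolding lin_disjoint_def n_def by blast
  have inj: "inj_on (\<lambda>i. x^i) {..<n}" unfolding n_def by (rule pow_inj[OF sK al])
  have dv: "min_poly K' x dvd min_poly K x"
    using mp_dvd[OF sK' al' poly_over_mono[OF KK' mp_over[OF sK al]] mp_root[OF sK al]] .
  have "\<not> degree (min_poly K' x) < n"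
    using pow_indep_zero[OF li inj mp_over[OF sK' al'] _ mp_root[OF sK' al']] mp_nz[OF sK' al'] by blast
  then show ?thesis
    using monic_dvd_eq[OF mp_monic[OF sK' al'] mp_monic[OF sK al] dv] n_def by simp
qed

lemma root_bij_card:
  assumes sF: "subfield F" and sE: "subfield E" and FE: "F \<subseteq> E"
    and aa: "alg F a" and ab: "alg F b"
    and p: "poly_over F p" "b = poly p a" and q: "poly_over F q" "a = poly q b"
  shows "card {x\<in>E. poly (min_poly F a) x = 0} = card {y\<in>E. poly (min_poly F b) y = 0}"
proof -
  define f where "f = min_poly F a"
  define g where "g = min_poly F b"
  have X: "poly_over F [:0, 1:]" using sF sf0[OF sF] sf1[OF sF] by simp
  have qpa: "poly q (poly p a) = a" by (simp only: p(2)[symmetric] q(2)[symmetric])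
  have pqb: "poly p (poly q b) = b" by (simp only: p(2)[symmetric] q(2)[symmetric])
  have 1: "poly g (poly p x) = 0" if "poly f x = 0" for x
  proof -
    have "f dvd pcompose g p" unfolding f_def g_def
      using mp_dvd[OF sF aa poly_over_pcompose[OF sF mp_over[OF sF ab] p(1)]]
        mp_root[OF sF ab] p(2)[symmetric] by (simp add: poly_pcompose)
    from dvd_root[OF this that] show ?thesis by (simp add: poly_pcompose)
  qed
  have 2: "poly q (poly p x) = x" if "poly f x = 0" for x
  proof -
    have "f dvd pcompose q p - [:0, 1:]" unfolding f_def
      using mp_dvd[OF sF aa poly_over_diff[OF sF poly_over_pcompose[OF sF q(1) p(1)] X]]
        qpa by (simp add: poly_pcompose)
    from dvd_root[OF this that] show ?thesis by (simp add: poly_pcompose)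
  qed
  have 3: "poly f (poly q y) = 0" if "poly g y = 0" for y
  proof -
    have "g dvd pcompose f q" unfolding f_def g_def
      using mp_dvd[OF sF ab poly_over_pcompose[OF sF mp_over[OF sF aa] q(1)]]
        mp_root[OF sF aa] q(2)[symmetric] by (simp add: poly_pcompose)
    from dvd_root[OF this that] show ?thesis by (simp add: poly_pcompose)
  qed
  have 4: "poly p (poly q y) = y" if "poly g y = 0" for y
  proof -
    have "g dvd pcompose p q - [:0, 1:]" unfolding g_def
      using mp_dvd[OF sF ab poly_over_diff[OF sF poly_over_pcompose[OF sF p(1) q(1)] X]]
        pqb by (simp add: poly_pcompose)
    from dvd_root[OF this that] show ?thesis by (simp add: poly_pcompose)
  qed
  have "bij_betw (poly p) {x\<in>E. poly f x = 0} {y\<in>E. poly g y = 0}"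
  proof (rule bij_betw_byWitness[where f' = "poly q"])
    show "\<forall>x\<in>{x \<in> E. poly f x = 0}. poly q (poly p x) = x" using 2 by blast
    show "\<forall>y\<in>{y \<in> E. poly g y = 0}. poly p (poly q y) = y" using 4 by blast
    show "poly p ` {x \<in> E. poly f x = 0} \<subseteq> {y \<in> E. poly g y = 0}"
      using 1 poly_in[OF sE FE p(1)] by blast
    show "poly q ` {y \<in> E. poly g y = 0} \<subseteq> {x \<in> E. poly f x = 0}"
      using 3 poly_in[OF sE FE q(1)] by blast
  qed
  then show ?thesis unfolding f_def g_def by (rule bij_betw_same_card)
qed


lemma gen_field_sub_iff: "gen_field F S \<subseteq> gen_field F T \<longleftrightarrow> S \<subseteq> gen_field F T"
  using gen_field_least[OF gen_field_subfield gen_field_upper(1)] gen_field_upper(2) by blast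

lemma gen_field_mono2: "S \<subseteq> T \<Longrightarrow> gen_field F S \<subseteq> gen_field F T"
  using gen_field_sub_iff gen_field_upper(2) by blast

lemma gen_field_of_sub: "subfield K \<Longrightarrow> S \<subseteq> K \<Longrightarrow> gen_field K S = K"
  using gen_field_least[of K K S] gen_field_upper[of K S] by blast

lemma span_gen:
  assumes "finite_ext K E"
  shows "\<exists>B. finite B \<and> B \<subseteq> E \<and> gen_field K B = E \<and> E = span_over K B"
proof -
  obtain B where B: "finite B" "B \<subseteq> E" "E = span_over K B" and sK: "subfield K" and sE: "subfield E"
    and KE: "K \<subseteq> E"
    using assms unfolding finite_ext_def by blast
  have "gen_field K B \<subseteq> E" using gen_field_least[OF sE KE B(2)] .
  moreover have "E \<subseteq> gen_field K B"
  proof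
    fix y assume "y \<in> E"
    then obtain c where c: "\<forall>b\<in>B. c b \<in> K" "y = (\<Sum>b\<in>B. c b * b)"
      using B(3) unfolding span_over_def by blast
    have "(\<Sum>b\<in>B. c b * b) \<in> gen_field K B"
      using c(1) gen_field_upper(1)[of K B] gen_field_upper(2)[of B K]
      by (intro sf_sum[OF gen_field_subfield] sf_mult[OF gen_field_subfield]) auto
    then show "y \<in> gen_field K B" using c(2) by simp
  qed
  ultimately show ?thesis using B by blast
qed

lemma finite_ext_finite:
  assumes fe: "finite_ext K E" and fK: "finite K"
  shows "finite E"
proof -
  obtain B where B: "finite B" "E = span_over K B"
    using fe unfolding finite_ext_def by blast
  have "E \<subseteq> (\<lambda>c. \<Sum>b\<in>B. c b * b) ` (PiE B (\<lambda>_. K))"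
  proof
    fix y assume "y \<in> E"
    then obtain c where c: "\<forall>b\<in>B. c b \<in> K" "y = (\<Sum>b\<in>B. c b * b)"
      using B(2) unfolding span_over_def by blast
    have "restrict c B \<in> PiE B (\<lambda>_. K)" using c(1) by auto
    moreover have "y = (\<Sum>b\<in>B. restrict c B b * b)" using c(2) by simp
    ultimately show "y \<in> (\<lambda>c. \<Sum>b\<in>B. c b * b) ` (PiE B (\<lambda>_. K))" by blast
  qed
  moreover have "finite (PiE B (\<lambda>_. K))" using B(1) fK by (simp add: finite_PiE)
  ultimately show ?thesis using finite_surj by blast
qed

lemma finite_subfield_cyclic:
  fixes E :: "'a::field set"
  assumes sf: "Defs.subfield E" and fin: "finite E"
  shows "\<exists>a\<in>E. \<forall>x\<in>E. x \<noteq> 0 \<longrightarrow> (\<exists>i::nat. x = a ^ i)"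
proof -
  define R :: "'a ring" where "R = \<lparr>carrier = E, monoid.mult = (*), one = (1::'a), zero = (0::'a), add = (+)\<rparr>"
  have c: "carrier R = E" "\<And>x y. x \<otimes>\<^bsub>R\<^esub> y = x * y" "\<one>\<^bsub>R\<^esub> = 1" "\<zero>\<^bsub>R\<^esub> = 0"
     "\<And>x y. x \<oplus>\<^bsub>R\<^esub> y = x + y"
    by (simp_all add: R_def)
  have S: "0 \<in> E" "1 \<in> E" "\<And>x y. x \<in> E \<Longrightarrow> y \<in> E \<Longrightarrow> x + y \<in> E"
     "\<And>x y. x \<in> E \<Longrightarrow> y \<in> E \<Longrightarrow> x * y \<in> E" "\<And>x. x \<in> E \<Longrightarrow> - x \<in> E"
     "\<And>x. x \<in> E \<Longrightarrow> inverse x \<in> E"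
    using sf unfolding Defs.subfield_def by auto
  have cr: "cring R"
  proof (rule cringI)
    show "abelian_group R"
      by (rule abelian_groupI) (auto simp: c S add.assoc add.commute intro!: bexI[of _ "- _"])
    show "Group.comm_monoid R"
      by (rule comm_monoidI) (auto simp: c S mult.assoc mult.commute)
    show "\<And>x y z. x \<in> carrier R \<Longrightarrow> y \<in> carrier R \<Longrightarrow> z \<in> carrier R \<Longrightarrow>
      (x \<oplus>\<^bsub>R\<^esub> y) \<otimes>\<^bsub>R\<^esub> z = x \<otimes>\<^bsub>R\<^esub> z \<oplus>\<^bsub>R\<^esub> y \<otimes>\<^bsub>R\<^esub> z"
      by (simp add: c distrib_right)
  qed
  have fr: "field R"
  proof (rule cring.field_intro2[OF cr])
    show "\<zero>\<^bsub>R\<^esub> \<noteq> \<one>\<^bsub>R\<^esub>" by (simp add: c)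
    fix x assume "x \<in> carrier R - {\<zero>\<^bsub>R\<^esub>}"
    then show "x \<in> Units R"
      unfolding Units_def by (auto simp: c S intro!: bexI[of _ "inverse x"])
  qed
  have fc: "finite (carrier R)" using fin c by simp
  obtain a where a: "a \<in> carrier (mult_of R)" and g: "carrier (mult_of R) = {a[^]\<^bsub>R\<^esub>i | i::nat . i \<in> UNIV}"
    using field.finite_field_mult_group_has_gen[OF fr fc] by (rule bexE)
  have pw: "a [^]\<^bsub>R\<^esub> i = a ^ i" for i :: nat
    by (induct i) (simp_all add: c)
  show ?thesis
  proof (intro bexI ballI impI)
    show "a \<in> E" using a c by simp
    fix x assume "x \<in> E" "x \<noteq> 0"
    then have "x \<in> carrier (mult_of R)" using c by simp
    then obtain i :: nat where "x = a [^]\<^bsub>R\<^esub> i" using g by blast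
    then show "\<exists>i::nat. x = a ^ i" using pw by (auto simp: nat_pow_mult_of)
  qed
qed


lemma prim_finite:
  assumes fe: "finite_ext K E" and fK: "finite K"
  shows "\<exists>\<theta>\<in>E. gen_field K {\<theta>} = E"
proof -
  have sK: "subfield K" and sE: "subfield E" and KE: "K \<subseteq> E" using fe unfolding finite_ext_def by auto
  obtain a where a: "a \<in> E" "\<forall>x\<in>E. x \<noteq> 0 \<longrightarrow> (\<exists>i::nat. x = a ^ i)"
    using finite_subfield_cyclic[OF sE finite_ext_finite[OF fe fK]] by blast
  have "gen_field K {a} \<subseteq> E" using gen_field_least[OF sE KE] a(1) by blast
  moreover have "E \<subseteq> gen_field K {a}"
  proof
    fix x assume x: "x \<in> E"
    show "x \<in> gen_field K {a}"
    proof (cases "x = 0")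
      case True then show ?thesis using sf0[OF gen_field_subfield] by simp
    next
      case False
      then obtain i :: nat where "x = a ^ i" using a(2) x by blast
      then show ?thesis using sf_power[OF gen_field_subfield, of a] gen_field_upper(2)[of "{a}" K] by blast
    qed
  qed
  ultimately show ?thesis using a(1) by blast
qed

lemma monic_single_root:
  fixes m g :: "'a::field poly"
  assumes ac: "\<forall>p::'a poly. degree p > 0 \<longrightarrow> (\<exists>x. poly p x = 0)"
    and lm: "lead_coeff m = 1" and dv: "m dvd g" and sq: "rsquarefree g" and rt: "poly m b = 0"
    and only: "\<And>y. poly m y = 0 \<Longrightarrow> y = b"
  shows "m = [:-b, 1:]"
proof -
  have "[:-b,1:] dvd m" using rt by (simp add: poly_eq_0_iff_dvd)
  then obtain k where k: "m = [:-b,1:] * k" by (elim dvdE)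
  have "m \<noteq> 0" using lm by auto
  then have k0: "k \<noteq> 0" using k by auto
  show ?thesis
  proof (cases "degree k = 0")
    case True
    have "lead_coeff m = lead_coeff [:-b,1:] * lead_coeff k" unfolding k by (rule lead_coeff_mult)
    then have "lead_coeff k = 1" using lm by simp
    then have "k = 1" using True by (metis degree_0_id one_pCons)
    then show ?thesis using k by simp
  next
    case False
    then obtain y where "poly k y = 0" using ac by blast
    then have "poly m y = 0" using k by simp
    then have "y = b" by (rule only)
    then have "[:-b,1:] dvd k" using \<open>poly k y = 0\<close> by (simp add: poly_eq_0_iff_dvd)
    then obtain k2 where k2: "k = [:-b,1:] * k2" by (elim dvdE)
    have "m = [:-b,1:]^2 * k2" unfolding k k2 power2_eq_square by (rule mult.assoc[symmetric])
    then have "[:-b,1:]^2 dvd m" by (rule dvdI)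
    then have "[:-b,1:]^2 dvd g" using dv by (rule dvd_trans)
    then have "2 \<le> order b g" using sq unfolding rsquarefree_def by (simp add: order_divides)
    moreover have "order b g = 0 \<or> order b g = 1" using sq unfolding rsquarefree_def by blast
    ultimately show ?thesis by auto
  qed
qed

lemma prim_step:
  assumes sK: "subfield K" and inf: "infinite K"
    and ac: "\<forall>p::'a poly. degree p > 0 \<longrightarrow> (\<exists>x. poly p x = 0)"
    and alK: "\<And>y. alg K y" and perf: "\<And>y. rsquarefree (min_poly K y)"
  shows "\<exists>c\<in>K. c \<noteq> 0 \<and> b \<in> gen_field K {a + c * (b::'a::field)}"
proof -
  define f where "f = min_poly K a"
  define g where "g = min_poly K b"
  define Ra where "Ra = {x. poly f x = 0}"
  define Rb where "Rb = {y. poly g y = 0}"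
  have fRa: "finite Ra" unfolding Ra_def f_def by (rule poly_roots_finite[OF mp_nz[OF sK alK]])
  have fRb: "finite Rb" unfolding Rb_def g_def by (rule poly_roots_finite[OF mp_nz[OF sK alK]])
  define Bad where "Bad = insert 0 ((\<lambda>(ai, bj). (ai - a) / (b - bj)) ` (Ra \<times> Rb))"
  have "finite Bad" unfolding Bad_def using fRa fRb by simp
  then have "infinite (K - Bad)" using inf by (simp add: Diff_infinite_finite)
  then have "K - Bad \<noteq> {}" by (rule infinite_imp_nonempty)
  then obtain c where c: "c \<in> K" "c \<notin> Bad" by blast
  have c0: "c \<noteq> 0" using c unfolding Bad_def by auto
  define \<theta> where "\<theta> = a + c * b"
  define T where "T = gen_field K {\<theta>}"
  have sT: "subfield T" unfolding T_def by (rule gen_field_subfield)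
  have KT: "K \<subseteq> T" unfolding T_def by (rule gen_field_upper)
  have tT: "\<theta> \<in> T" unfolding T_def using gen_field_upper(2) by blast
  have alT: "alg T b" using alg_mono[OF KT alK] .
  define m where "m = min_poly T b"
  define h where "h = pcompose f [:\<theta>, -c:]"
  have hT: "poly_over T h" unfolding h_def f_def
    using sT poly_over_mono[OF KT mp_over[OF sK alK]] tT sf_uminus[OF sT] c(1) KT
    by (intro poly_over_pcompose) auto
  have "poly h b = poly f a" unfolding h_def \<theta>_def by (simp add: poly_pcompose algebra_simps)
  then have hb: "poly h b = 0" unfolding f_def using mp_root[OF sK alK] by simp
  have mh: "m dvd h" unfolding m_def by (rule mp_dvd[OF sT alT hT hb])
  have mg: "m dvd g" unfolding m_def g_def
    by (rule mp_dvd[OF sT alT poly_over_mono[OF KT mp_over[OF sK alK]] mp_root[OF sK alK]])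
  have only: "y = b" if y: "poly m y = 0" for y
  proof (rule ccontr)
    assume yb: "y \<noteq> b"
    have "poly g y = 0" using dvd_root[OF mg y] .
    then have "y \<in> Rb" unfolding Rb_def by simp
    have "poly h y = 0" using dvd_root[OF mh y] .
    then have "poly f (\<theta> - c * y) = 0" unfolding h_def by (simp add: poly_pcompose algebra_simps)
    then have "\<theta> - c * y \<in> Ra" unfolding Ra_def by simp
    have by0: "b - y \<noteq> 0" using yb by simp
    have "(\<theta> - c * y) - a = c * (b - y)" unfolding \<theta>_def by (simp add: algebra_simps)
    then have "((\<theta> - c * y) - a) / (b - y) = c" using by0 by simp
    then have "c \<in> Bad" unfolding Bad_def using \<open>y \<in> Rb\<close> \<open>\<theta> - c * y \<in> Ra\<close>
      by (intro insertI2 image_eqI[of _ _ "(\<theta> - c * y, y)"]) auto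
    then show False using c by simp
  qed
  have "m = [:-b, 1:]"
  proof (rule monic_single_root[OF ac])
    show "lead_coeff m = 1" unfolding m_def by (rule mp_monic[OF sT alT])
    show "m dvd g" by (rule mg)
    show "rsquarefree g" unfolding g_def by (rule perf)
    show "poly m b = 0" unfolding m_def by (rule mp_root[OF sT alT])
    show "\<And>y. poly m y = 0 \<Longrightarrow> y = b" by (rule only)
  qed
  then have "coeff m 0 = - b" by simp
  moreover have "coeff m 0 \<in> T" using mp_over[OF sT alT] unfolding m_def poly_over_def by blast
  ultimately have "b \<in> T" using sf_uminus[OF sT, of "coeff m 0"] by simp
  then show ?thesis using c c0 unfolding T_def \<theta>_def by blast
qed

lemma prim_two:
  assumes sK: "subfield K" and inf: "infinite K"
    and ac: "\<forall>p::'a poly. degree p > 0 \<longrightarrow> (\<exists>x. poly p x = 0)"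
    and alK: "\<And>y. alg K y" and perf: "\<And>y. rsquarefree (min_poly K y)"
  shows "\<exists>\<theta>. gen_field K {a, b} = gen_field K {\<theta> :: 'a::field}"
proof -
  obtain c where c: "c \<in> K" "b \<in> gen_field K {a + c * b}"
  proof -
    from prim_step[OF sK inf ac alK perf, of b a] obtain c where "c \<in> K" "c \<noteq> 0" "b \<in> gen_field K {a + c * b}"
      by (elim bexE conjE)
    then show ?thesis using that by blast
  qed
  define T where "T = gen_field K {a + c * b}"
  have sT: "subfield T" unfolding T_def by (rule gen_field_subfield)
  have KT: "K \<subseteq> T" unfolding T_def by (rule gen_field_upper)
  have tT: "a + c * b \<in> T" unfolding T_def using gen_field_upper(2) by blast
  have bT: "b \<in> T" using c(2) unfolding T_def .
  have cT: "c \<in> T" using KT c(1) by blast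
  have "(a + c * b) - c * b \<in> T" by (rule sf_diff[OF sT tT sf_mult[OF sT cT bT]])
  then have aT: "a \<in> T" by simp
  have "{a, b} \<subseteq> T" using aT bT by simp
  then have "gen_field K {a, b} \<subseteq> T" by (rule gen_field_least[OF sT KT])
  moreover have "T \<subseteq> gen_field K {a, b}"
  proof -
    have sG: "subfield (gen_field K {a,b})" by (rule gen_field_subfield)
    have abG: "{a,b} \<subseteq> gen_field K {a,b}" by (rule gen_field_upper(2))
    have cG: "c \<in> gen_field K {a,b}" using gen_field_upper(1)[of K "{a,b}"] c(1) by blast
    have "a + c*b \<in> gen_field K {a,b}" using abG by (intro sf_add[OF sG] sf_mult[OF sG cG]) auto
    then show ?thesis unfolding T_def gen_field_sub_iff by simp
  qed
  ultimately have "gen_field K {a, b} = T" by (rule subset_antisym)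
  then have "gen_field K {a, b} = gen_field K {a + c * b}" by (simp only: T_def)
  then show ?thesis by (rule exI)
qed

lemma prim_set:
  assumes sK: "subfield K" and inf: "infinite K"
    and ac: "\<forall>p::'a poly. degree p > 0 \<longrightarrow> (\<exists>x. poly p x = 0)"
    and alK: "\<And>y. alg K y" and perf: "\<And>y. rsquarefree (min_poly K y)"
    and fS: "finite S"
  shows "\<exists>\<theta>. gen_field K S = gen_field K {\<theta> :: 'a::field}"
  using fS
proof (induction S rule: finite_induct)
  case empty
  have "gen_field K {} = K" by (rule gen_field_of_sub[OF sK]) auto
  moreover have "gen_field K {0} = K" by (rule gen_field_of_sub[OF sK]) (auto simp: sf0[OF sK])
  ultimately have "gen_field K {} = gen_field K {0}" by simp
  then show ?case by blast
next
  case (insert b S)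
  then obtain a where a: "gen_field K S = gen_field K {a}" by blast
  have "gen_field K (insert b S) = gen_field K {a, b}"
  proof (rule subset_antisym)
    have "S \<subseteq> gen_field K {a, b}"
      using gen_field_upper(2)[of S K] a gen_field_mono2[of "{a}" "{a, b}" K] by blast
    then show "gen_field K (insert b S) \<subseteq> gen_field K {a, b}"
      unfolding gen_field_sub_iff using gen_field_upper(2)[of "{a,b}" K] by blast
    have "a \<in> gen_field K (insert b S)"
      using gen_field_upper(2)[of "{a}" K] a[symmetric] gen_field_mono2[of S "insert b S" K] by blast
    then show "gen_field K {a, b} \<subseteq> gen_field K (insert b S)"
      unfolding gen_field_sub_iff using gen_field_upper(2)[of "insert b S" K] by blast
  qed
  moreover obtain \<theta> where "gen_field K {a, b} = gen_field K {\<theta>}"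
    using prim_two[OF sK inf ac alK perf, of a b] by blast
  ultimately show ?case by blast
qed

lemma primitive_element:
  assumes sK: "subfield K"
    and ac: "\<forall>p::'a poly. degree p > 0 \<longrightarrow> (\<exists>x. poly p x = 0)"
    and alK: "\<And>y. alg K y" and perf: "\<And>y. rsquarefree (min_poly K y)"
    and fe: "finite_ext K E"
  shows "\<exists>\<theta>\<in>E. gen_field K {\<theta>} = (E :: 'a::field set)"
proof (cases "finite K")
  case True
  then show ?thesis using prim_finite[OF fe] by blast
next
  case False
  obtain B where B: "finite B" "gen_field K B = E" using span_gen[OF fe] by blast
  obtain \<theta> where "gen_field K B = gen_field K {\<theta>}" using prim_set[OF sK False ac alK perf B(1)] by blast
  moreover have "\<theta> \<in> gen_field K {\<theta>}" using gen_field_upper(2) by blast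
  ultimately show ?thesis using B(2) by auto
qed


lemma insert_indep:
  assumes sK: "subfield K" and li: "lin_indep_over K P" and gP: "\<gamma> \<notin> P"
    and gs: "\<gamma> \<notin> span_over K P"
  shows "lin_indep_over K (insert \<gamma> P)"
proof -
  have fin: "finite P" using li unfolding lin_indep_over_def by blast
  have "\<forall>x\<in>insert \<gamma> P. c x = 0"
    if cK: "\<forall>x\<in>insert \<gamma> P. c x \<in> K" and s0: "(\<Sum>x\<in>insert \<gamma> P. c x * x) = 0" for c
  proof -
    have s1: "c \<gamma> * \<gamma> + (\<Sum>x\<in>P. c x * x) = 0" using s0 fin gP by simp
    have cg: "c \<gamma> = 0"
    proof (rule ccontr)
      assume cg0: "c \<gamma> \<noteq> 0"
      have "\<gamma> = (\<Sum>x\<in>P. (- c x / c \<gamma>) * x)"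
      proof -
        have "c \<gamma> * \<gamma> = - (\<Sum>x\<in>P. c x * x)" using s1 by (simp add: add_eq_0_iff)
        then have "\<gamma> = - (\<Sum>x\<in>P. c x * x) / c \<gamma>" using cg0 by (simp add: field_simps)
        also have "\<dots> = (\<Sum>x\<in>P. (- c x / c \<gamma>) * x)"
          by (simp add: sum_divide_distrib sum_negf[symmetric])
        finally show ?thesis .
      qed
      moreover have "\<forall>x\<in>P. - c x / c \<gamma> \<in> K"
        using cK sf_divide[OF sK] sf_uminus[OF sK] by simp
      ultimately have "\<gamma> \<in> span_over K P" unfolding span_over_def
        by (intro CollectI exI[of _ "\<lambda>x. - c x / c \<gamma>"]) simp
      then show False using gs by simp
    qed
    then have "(\<Sum>x\<in>P. c x * x) = 0" using s1 by simp
    moreover have "\<forall>x\<in>P. c x \<in> K" using cK by simp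
    ultimately have "\<forall>x\<in>P. c x = 0" using li unfolding lin_indep_over_def by blast
    then show ?thesis using cg by simp
  qed
  then show ?thesis unfolding lin_indep_over_def using fin by simp
qed

lemma descend:
  assumes sK: "subfield K" and sK': "subfield K'" and KK': "K \<subseteq> K'" and sM: "subfield M"
    and alK: "\<And>y. alg K y" and mu: "gen_field K {\<mu>} = M"
    and ld: "lin_disjoint K A K'" and MA: "M \<subseteq> A" and gA: "\<gamma> \<in> A"
    and gMK: "\<gamma> \<in> gen_field K' {\<mu>}"
  shows "\<gamma> \<in> M"
proof (rule ccontr)
  assume gM: "\<gamma> \<notin> M"
  define n where "n = degree (min_poly K \<mu>)"
  define P where "P = (\<lambda>i. \<mu>^i) ` {..<n}"
  have KM: "K \<subseteq> M" using mu gen_field_upper(1) by blast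
  have muM: "\<mu> \<in> M" using mu gen_field_upper(2)[of "{\<mu>}" K] by blast
  have PM: "P \<subseteq> M" unfolding P_def using sf_power[OF sM muM] by blast
  have liK: "lin_indep_over K P" unfolding P_def n_def by (rule pow_indep[OF sK alK])
  have inj: "inj_on (\<lambda>i. \<mu>^i) {..<n}" unfolding n_def by (rule pow_inj[OF sK alK])
  have fin: "finite P" unfolding P_def by simp
  have gP: "\<gamma> \<notin> P" using PM gM by blast
  have "span_over K P \<subseteq> M"
  proof
    fix y assume "y \<in> span_over K P"
    then obtain c where c: "\<forall>b\<in>P. c b \<in> K" "y = (\<Sum>b\<in>P. c b * b)" unfolding span_over_def by blast
    have "(\<Sum>b\<in>P. c b * b) \<in> M" using c(1) KM PM
      by (intro sf_sum[OF sM] sf_mult[OF sM]) auto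
    then show "y \<in> M" using c(2) by simp
  qed
  then have gs: "\<gamma> \<notin> span_over K P" using gM by blast
  have li2: "lin_indep_over K (insert \<gamma> P)" by (rule insert_indep[OF sK liK gP gs])
  have "insert \<gamma> P \<subseteq> A" using gA PM MA by blast
  then have li2': "lin_indep_over K' (insert \<gamma> P)" using ld li2 unfolding lin_disjoint_def by blast
  have alK': "\<And>y. alg K' y" using alg_mono[OF KK' alK] .
  obtain p where p: "poly_over K' p" "\<gamma> = poly p \<mu>"
    using gMK unfolding gen_field_single[OF sK' alK'] by blast
  obtain r where r: "poly_over K' r" "r = 0 \<or> degree r < n" "min_poly K \<mu> dvd p - r"
    using poly_reduce[OF sK' poly_over_mono[OF KK' mp_over[OF sK alK]] mp_monic[OF sK alK] p(1)]
    unfolding n_def by blast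
  have "poly (p - r) \<mu> = 0" using dvd_root[OF r(3) mp_root[OF sK alK]] .
  then have gr: "\<gamma> = poly r \<mu>" using p(2) by simp
  have n0: "0 < n" unfolding n_def by (rule mp_deg_pos[OF sK alK])
  have dr: "degree r < n" using r(2) n0 by auto
  have gsum: "\<gamma> = (\<Sum>i<n. coeff r i * \<mu>^i)" using gr poly_sum_lt[OF dr] by simp
  define c where "c y = (if y = \<gamma> then -1 else coeff r (inv_into {..<n} (\<lambda>i. \<mu>^i) y))" for y
  have cK': "\<forall>y\<in>insert \<gamma> P. c y \<in> K'"
    using r(1) sf_uminus[OF sK' sf1[OF sK']] unfolding c_def poly_over_def by auto
  have "(\<Sum>y\<in>P. c y * y) = (\<Sum>i<n. c (\<mu>^i) * \<mu>^i)"
    unfolding P_def by (simp add: sum.reindex[OF inj])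
  also have "\<dots> = (\<Sum>i<n. coeff r i * \<mu>^i)"
  proof (rule sum.cong)
    fix i assume i: "i \<in> {..<n}"
    have "\<mu>^i \<noteq> \<gamma>" using gP i unfolding P_def by blast
    then show "c (\<mu>^i) * \<mu>^i = coeff r i * \<mu>^i"
      unfolding c_def using inv_into_f_f[OF inj i] by simp
  qed simp
  finally have sP: "(\<Sum>y\<in>P. c y * y) = \<gamma>" using gsum by simp
  have "(\<Sum>y\<in>insert \<gamma> P. c y * y) = c \<gamma> * \<gamma> + (\<Sum>y\<in>P. c y * y)" using fin gP by simp
  also have "\<dots> = 0" using sP unfolding c_def by simp
  finally have "(\<Sum>y\<in>insert \<gamma> P. c y * y) = 0" .
  then have "\<forall>y\<in>insert \<gamma> P. c y = 0" using li2' cK' unfolding lin_indep_over_def by blast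
  then have "c \<gamma> = 0" by simp
  then show False unfolding c_def by simp
qed

theorem theorem8p12:
  fixes K L M K' :: "'a::field set"
  assumes "subfield K" and "is_alg_closure_of K" and "perfect K"
    and "finite_ext K L" and "galois_ext K K'" and "finite_ext K M" and "L \<subseteq> M"
    and "lin_disjoint K (galois_closure K L) K'"
    and "lin_disjoint K (galois_closure K M) K'"
  shows "root_cap_ext K M L = root_cap_ext K' (compositum M K') (compositum L K')"
proof -
  note sK = assms(1)
  have sL: "subfield L" and KL: "K \<subseteq> L" using assms(4) unfolding finite_ext_def by auto
  have sM: "subfield M" and KM: "K \<subseteq> M" using assms(6) unfolding finite_ext_def by auto
  have sK': "subfield K'" and KK': "K \<subseteq> K'"
    using assms(5) unfolding galois_ext_def finite_ext_def by auto
  have ac: "\<forall>p::'a poly. degree p > 0 \<longrightarrow> (\<exists>x. poly p x = 0)"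
    using assms(2) unfolding is_alg_closure_of_def by blast
  have alK: "\<And>y. alg K y" using assms(2) unfolding is_alg_closure_of_def alg_def by blast
  have alK': "\<And>y. alg K' y" using alg_mono[OF KK' alK] .
  have perf: "\<And>y. rsquarefree (min_poly K y)" using assms(3) unfolding perfect_def by blast
  define \<alpha> where "\<alpha> = (SOME \<alpha>. \<alpha> \<in> L \<and> gen_field K {\<alpha>} = L)"
  have "\<exists>\<alpha>. \<alpha> \<in> L \<and> gen_field K {\<alpha>} = L"
    using primitive_element[OF sK ac alK perf assms(4)] by blast
  then have "\<alpha> \<in> L \<and> gen_field K {\<alpha>} = L" unfolding \<alpha>_def by (rule someI_ex)
  then have aL: "\<alpha> \<in> L" and ga: "gen_field K {\<alpha>} = L" by auto
  obtain \<mu> where muM: "\<mu> \<in> M" and gmu: "gen_field K {\<mu>} = M"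
    using primitive_element[OF sK ac alK perf assms(6)] by blast
  define LK where "LK = compositum L K'"
  define MK where "MK = compositum M K'"
  have LKeq: "gen_field K' {\<alpha>} = LK"
  proof (rule subset_antisym)
    have "\<alpha> \<in> LK" using aL gen_field_upper(1)[of L K'] unfolding LK_def by blast
    then have "{\<alpha>} \<subseteq> LK" by simp
    then show "gen_field K' {\<alpha>} \<subseteq> LK" unfolding LK_def
      by (rule gen_field_least[OF gen_field_subfield gen_field_upper(2)])
    have K'a: "K \<subseteq> gen_field K' {\<alpha>}" using KK' gen_field_upper(1)[of K' "{\<alpha>}"] by blast
    have "{\<alpha>} \<subseteq> gen_field K' {\<alpha>}" by (rule gen_field_upper(2))
    then have "L \<subseteq> gen_field K' {\<alpha>}" unfolding ga[symmetric]
      by (rule gen_field_least[OF gen_field_subfield K'a])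
    then show "LK \<subseteq> gen_field K' {\<alpha>}" unfolding LK_def
      by (rule gen_field_least[OF gen_field_subfield _ gen_field_upper(1)])
  qed
  have MKeq: "gen_field K' {\<mu>} = MK"
  proof (rule subset_antisym)
    have "\<mu> \<in> MK" using muM gen_field_upper(1)[of M K'] unfolding MK_def by blast
    then have "{\<mu>} \<subseteq> MK" by simp
    then show "gen_field K' {\<mu>} \<subseteq> MK" unfolding MK_def
      by (rule gen_field_least[OF gen_field_subfield gen_field_upper(2)])
    have K'a: "K \<subseteq> gen_field K' {\<mu>}" using KK' gen_field_upper(1)[of K' "{\<mu>}"] by blast
    have "{\<mu>} \<subseteq> gen_field K' {\<mu>}" by (rule gen_field_upper(2))
    then have "M \<subseteq> gen_field K' {\<mu>}" unfolding gmu[symmetric]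
      by (rule gen_field_least[OF gen_field_subfield K'a])
    then show "MK \<subseteq> gen_field K' {\<mu>}" unfolding MK_def
      by (rule gen_field_least[OF gen_field_subfield _ gen_field_upper(1)])
  qed
  define \<beta> where "\<beta> = (SOME \<beta>. \<beta> \<in> LK \<and> gen_field K' {\<beta>} = LK)"
  have "\<exists>\<beta>. \<beta> \<in> LK \<and> gen_field K' {\<beta>} = LK"
    using LKeq gen_field_upper(2)[of "{\<alpha>}" K'] by blast
  then have "\<beta> \<in> LK \<and> gen_field K' {\<beta>} = LK" unfolding \<beta>_def by (rule someI_ex)
  then have bLK: "\<beta> \<in> LK" and gb: "gen_field K' {\<beta>} = LK" by auto
  obtain p where p: "poly_over K' p" "\<beta> = poly p \<alpha>"
    using bLK unfolding LKeq[symmetric] gen_field_single[OF sK' alK'] by blast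
  have "\<alpha> \<in> gen_field K' {\<beta>}" unfolding gb LKeq[symmetric] using gen_field_upper(2) by blast
  then obtain q where q: "poly_over K' q" "\<alpha> = poly q \<beta>"
    unfolding gen_field_single[OF sK' alK'] by blast
  have sMK: "subfield MK" unfolding MK_def by (rule gen_field_subfield)
  have K'MK: "K' \<subseteq> MK" unfolding MK_def by (rule gen_field_upper)
  have card1: "card {x\<in>MK. poly (min_poly K' \<alpha>) x = 0} = card {y\<in>MK. poly (min_poly K' \<beta>) y = 0}"
    by (rule root_bij_card[OF sK' sMK K'MK alK' alK' p q])
  have LGL: "L \<subseteq> galois_closure K L" unfolding galois_closure_def by blast
  have PA: "(\<lambda>i. \<alpha>^i) ` {..<degree (min_poly K \<alpha>)} \<subseteq> galois_closure K L"
    using sf_power[OF sL aL] LGL by blast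
  have mpeq: "min_poly K' \<alpha> = min_poly K \<alpha>"
    by (rule mp_lin_disj[OF sK sK' KK' alK assms(8) PA])
  have MGM: "M \<subseteq> galois_closure K M" unfolding galois_closure_def by blast
  have rootsEq: "{x\<in>MK. poly (min_poly K \<alpha>) x = 0} = {x\<in>M. poly (min_poly K \<alpha>) x = 0}"
  proof
    show "{x\<in>M. poly (min_poly K \<alpha>) x = 0} \<subseteq> {x\<in>MK. poly (min_poly K \<alpha>) x = 0}"
      using gen_field_upper(1)[of M K'] unfolding MK_def by blast
    show "{x\<in>MK. poly (min_poly K \<alpha>) x = 0} \<subseteq> {x\<in>M. poly (min_poly K \<alpha>) x = 0}"
    proof
      fix \<gamma> assume g: "\<gamma> \<in> {x\<in>MK. poly (min_poly K \<alpha>) x = 0}"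
      have gA: "\<gamma> \<in> galois_closure K M"
        unfolding galois_closure_def
      proof
        fix F assume "F \<in> {F. normal_ext K F \<and> M \<subseteq> F}"
        then have nF: "normal_ext K F" and MF: "M \<subseteq> F" by auto
        have "\<alpha> \<in> F" using aL assms(7) MF by blast
        then show "\<gamma> \<in> F" using nF g unfolding normal_ext_def by blast
      qed
      have "\<gamma> \<in> gen_field K' {\<mu>}" using g MKeq by simp
      then have "\<gamma> \<in> M" by (rule descend[OF sK sK' KK' sM alK gmu assms(9) MGM gA])
      then show "\<gamma> \<in> {x\<in>M. poly (min_poly K \<alpha>) x = 0}" using g by simp
    qed
  qed
  have "root_cap_ext K M L = card {x\<in>M. poly (min_poly K \<alpha>) x = 0}"
    unfolding root_cap_ext_def root_cap_def \<alpha>_def by simp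
  also have "\<dots> = card {x\<in>MK. poly (min_poly K' \<alpha>) x = 0}" using rootsEq mpeq by simp
  also have "\<dots> = card {y\<in>MK. poly (min_poly K' \<beta>) y = 0}" by (rule card1)
  also have "\<dots> = root_cap_ext K' MK LK"
    unfolding root_cap_ext_def root_cap_def \<beta>_def by simp
  finally show ?thesis unfolding MK_def LK_def .
qed

end
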